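(* For every $m\in\mathbb{Z}_{>0}$, $\alpha(-1)F^m\in C_2(V_L^+)$.
   Context: $L=\mathbb{Z}\alpha$, $\langle\alpha,\alpha\rangle=2k$; $V_L=M(1)\otimes\mathbb{C}[L]$ the lattice VOA, $V_L^+$ the fixed points of the involution $\theta$ lifted from $-1$ on $L$. $F^m=e^{m\alpha}-e^{-m\alpha}$. $C_2(V)$ is the span of $\{v_{-2}u:u,v\in V\}$. *)

theory Defs
  imports Complex_Main "HOL-Library.Multiset"
begin

text \<open>Concrete model of the rank-one lattice VOA V_L, L = Z alpha, (alpha,alpha) = 2k.
  Basis of V_L = M(1) (x) C[L]: pairs (mu, r) with mu a multiset of positive naturals,
  standing for  alpha(-mu_1) ... alpha(-mu_t) e^{r alpha}.  Vectors are coefficient functions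
  (finite support is imposed in VL).  The 2-cocycle is taken trivial (legitimate because
  (beta,gamma) is even for all beta, gamma in L).\<close>

type_synonym basis = "nat multiset \<times> int"
type_synonym vec = "basis \<Rightarrow> complex"

definition vzero :: vec where "vzero = (\<lambda>_. 0)"
definition bv :: "basis \<Rightarrow> vec" where "bv b = (\<lambda>c. if c = b then 1 else 0)"
definition vadd :: "vec \<Rightarrow> vec \<Rightarrow> vec" where "vadd u v = (\<lambda>c. u c + v c)"
definition vsmult :: "complex \<Rightarrow> vec \<Rightarrow> vec" where "vsmult a v = (\<lambda>c. a * v c)"
definition vsum :: "('i \<Rightarrow> vec) \<Rightarrow> 'i set \<Rightarrow> vec" where
  "vsum T I = (\<lambda>c. \<Sum>i\<in>I. T i c)"
definition supp :: "vec \<Rightarrow> basis set" where "supp v = {b. v b \<noteq> 0}"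

definition lin :: "(basis \<Rightarrow> vec) \<Rightarrow> vec \<Rightarrow> vec" where
  "lin f v = (\<lambda>c. \<Sum>b\<in>supp v. v b * f b c)"

definition fsum :: "('i \<Rightarrow> vec) \<Rightarrow> 'i set \<Rightarrow> vec" where
  "fsum T I = vsum T {i\<in>I. T i \<noteq> vzero}"

text \<open>Heisenberg modes alpha(n):  [alpha(m),alpha(n)] = 2k m delta_{m+n,0}, alpha(0) e^{r alpha} = 2kr e^{r alpha}.\<close>
fun hb :: "nat \<Rightarrow> int \<Rightarrow> basis \<Rightarrow> vec" where
  "hb k n (mu, r) =
     (if n < 0 then bv (mu + {#nat (-n)#}, r)
      else if n = 0 then vsmult (of_int (2 * int k * r)) (bv (mu, r))
      else vsmult (of_nat (nat n * 2 * k * count mu (nat n))) (bv (mu - {#nat n#}, r)))"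

definition hmode :: "nat \<Rightarrow> int \<Rightarrow> vec \<Rightarrow> vec" where
  "hmode k n = lin (hb k n)"

definition hprod :: "nat \<Rightarrow> int list \<Rightarrow> vec \<Rightarrow> vec" where
  "hprod k ns v = foldr (hmode k) ns v"

text \<open>Partitions of j and coefficients of exp(sum_n x_n z^n / n).\<close>
definition parts :: "nat \<Rightarrow> nat multiset set" where
  "parts j = {mu. set_mset mu \<subseteq> {1..j} \<and> sum_mset mu = j}"

definition pcoef :: "nat multiset \<Rightarrow> complex" where
  "pcoef mu = (\<Prod>n\<in>set_mset mu. 1 / (of_nat n ^ count mu n * fact (count mu n)))"

text \<open>z^i coefficient of E^-(-beta,z) and z^{-j} coefficient of E^+(-beta,z), beta = s alpha.\<close>
definition Sminus :: "nat \<Rightarrow> int \<Rightarrow> nat \<Rightarrow> vec \<Rightarrow> vec" where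
  "Sminus k s i v = vsum (\<lambda>mu. vsmult (of_int s ^ size mu * pcoef mu)
       (hprod k (map (\<lambda>n. - int n) (sorted_list_of_multiset mu)) v)) (parts i)"

definition Splus :: "nat \<Rightarrow> int \<Rightarrow> nat \<Rightarrow> vec \<Rightarrow> vec" where
  "Splus k s j v = vsum (\<lambda>mu. vsmult (of_int (- s) ^ size mu * pcoef mu)
       (hprod k (map int (sorted_list_of_multiset mu)) v)) (parts j)"

text \<open>Modes of e^{s alpha}:  Y(e^beta,z) = E^-(-beta,z) E^+(-beta,z) e_beta z^{beta(0)} = sum_n (e^beta)_n z^{-n-1}.\<close>
fun emode_b :: "nat \<Rightarrow> int \<Rightarrow> int \<Rightarrow> basis \<Rightarrow> vec" where
  "emode_b k s n (mu, r) =
     vsum (\<lambda>j. let i = int j - 2 * int k * s * r - n - 1 in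
                 if i \<ge> 0 then Sminus k s (nat i) (Splus k s j (bv (mu, r + s))) else vzero)
          {0..sum_mset mu}"

definition emode :: "nat \<Rightarrow> int \<Rightarrow> int \<Rightarrow> vec \<Rightarrow> vec" where
  "emode k s n = lin (emode_b k s n)"

definition gbin :: "int \<Rightarrow> nat \<Rightarrow> complex" where
  "gbin m p = (of_int (- m - 1) gchoose (p - 1))"

text \<open>Modes of alpha(-p_1)...alpha(-p_t) e^{s alpha}, via
  Y(alpha(-p)v,z) = :(d^{(p-1)} alpha(z)) Y(v,z):, i.e.
  (alpha(-p)v)_n = sum_{m<0} C(-m-1,p-1) alpha(m) v_{n-m-p} + sum_{m>=0} C(-m-1,p-1) v_{n-m-p} alpha(m).\<close>
fun vml :: "nat \<Rightarrow> nat list \<Rightarrow> int \<Rightarrow> int \<Rightarrow> vec \<Rightarrow> vec" where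
  "vml k [] s n w = emode k s n w"
| "vml k (p # ps) s n w =
     vadd (fsum (\<lambda>m. vsmult (gbin m p) (hmode k m (vml k ps s (n - m - int p) w))) {m. m < 0})
          (fsum (\<lambda>m. vsmult (gbin m p) (vml k ps s (n - m - int p) (hmode k m w))) {m. m \<ge> 0})"

text \<open>The vertex operator mode v_n u, Y(v,z) = sum_n v_n z^{-n-1}, extended linearly in v.\<close>
definition vmode :: "nat \<Rightarrow> vec \<Rightarrow> int \<Rightarrow> vec \<Rightarrow> vec" where
  "vmode k v n u = (\<lambda>c. \<Sum>b\<in>supp v. v b * vml k (sorted_list_of_multiset (fst b)) (snd b) n u c)"

definition VL :: "vec set" where
  "VL = {v. finite (supp v) \<and> (\<forall>b\<in>supp v. 0 \<notin># fst b)}"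

definition theta :: "vec \<Rightarrow> vec" where
  "theta v = (\<lambda>(mu, r). (-1) ^ size mu * v (mu, - r))"

definition VLplus :: "vec set" where
  "VLplus = {v \<in> VL. theta v = v}"

inductive_set cspan :: "vec set \<Rightarrow> vec set" for S where
  zero: "vzero \<in> cspan S"
| add: "x \<in> S \<Longrightarrow> y \<in> cspan S \<Longrightarrow> vadd (vsmult a x) y \<in> cspan S"

definition C2 :: "nat \<Rightarrow> vec set \<Rightarrow> vec set" where
  "C2 k V = cspan {vmode k v (-2) u | u v. u \<in> V \<and> v \<in> V}"

definition F :: "int \<Rightarrow> vec" where
  "F m = vadd (bv ({#}, m)) (vsmult (-1) (bv ({#}, - m)))"

end

theory Submission
  imports Defs
begin

lemma supp_bv: "supp (bv b) = {b}"
  by (auto simp: supp_def bv_def)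

lemma lin_bv: "lin f (bv b) = f b"
  unfolding lin_def supp_bv by (rule ext) (simp add: bv_def)

lemma lin_two:
  assumes "supp v = {b1, b2}" "b1 \<noteq> b2"
  shows "lin f v c = v b1 * f b1 c + v b2 * f b2 c"
  using assms by (simp add: lin_def)

lemma parts0: "parts 0 = {{#}}"
  by (auto simp: parts_def)

lemma parts1: "parts 1 = {{#1#}}"
proof
  show "parts 1 \<subseteq> {{#1#}}"
  proof
    fix mu assume "mu \<in> parts 1"
    then have s: "set_mset mu \<subseteq> {1}" and t: "sum_mset mu = 1" by (auto simp: parts_def)
    have r: "mu = replicate_mset (count mu 1) 1"
      using s by (intro multiset_eqI) (auto simp: count_eq_zero_iff)
    have "sum_mset (replicate_mset (count mu 1) (1::nat)) = count mu 1"
      by (simp only: sum_mset_replicate_mset) simp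
    with r have "sum_mset mu = count mu 1" by simp
    with t have "count mu 1 = 1" by simp
    with r show "mu \<in> {{#1#}}" by simp
  qed
next
  show "{{#1#}} \<subseteq> parts 1" by (auto simp: parts_def)
qed

lemma parts1': "parts (Suc 0) = {{#Suc 0#}}" using parts1 by simp

lemma hmode_bv: "hmode k n (bv b) = hb k n b" by (simp add: hmode_def lin_bv)

lemma pcoef0: "pcoef {#} = 1" by (simp add: pcoef_def)
lemma pcoef1: "pcoef {#1#} = 1" by (simp add: pcoef_def)
lemma pcoef1': "pcoef {#Suc 0#} = 1" by (simp add: pcoef_def)

lemma emode_vac: "emode k s (-2) (bv ({#}, 0)) = vsmult (of_int s) (bv ({#1#}, s))"
proof -
  have "emode k s (-2) (bv ({#}, 0)) = emode_b k s (-2) ({#}, 0)"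
    by (simp add: emode_def lin_bv)
  also have "\<dots> = Sminus k s 1 (Splus k s 0 (bv ({#}, s)))"
    by (rule ext) (simp add: vsum_def)
  also have "\<dots> = vsmult (of_int s) (bv ({#1#}, s))"
  proof (rule ext)
    fix c
    have "Splus k s 0 (bv ({#}, s)) = bv ({#}, s)"
      by (rule ext) (simp add: Splus_def parts0 pcoef0 vsum_def vsmult_def hprod_def)
    moreover have "Sminus k s 1 v = vsmult (of_int s) (hmode k (-1) v)" for v
      by (rule ext) (simp add: Sminus_def parts1' pcoef1' vsum_def vsmult_def hprod_def)
    ultimately show "Sminus k s 1 (Splus k s 0 (bv ({#}, s))) c = vsmult (of_int s) (bv ({#1#}, s)) c"
      by (simp add: hmode_bv)
  qed
  finally show ?thesis .
qed

theorem lemma4p6: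
  fixes k :: nat and m :: int
  assumes "k > 0" and "m > 0"
  shows "hmode k (-1) (F m) \<in> C2 k VLplus"
proof -
  define E where "E = vadd (bv ({#}, m)) (bv ({#}, - m))"
  define vac where "vac = bv ({#}, 0::int)"
  have ne: "({#}, m) \<noteq> ({#}, - m)" using assms by simp
  have suppE: "supp E = {({#}, m), ({#}, - m)}"
    using assms by (auto simp: E_def supp_def vadd_def bv_def)
  have suppF: "supp (F m) = {({#}, m), ({#}, - m)}"
    using assms by (auto simp: F_def supp_def vadd_def vsmult_def bv_def)
  have thE: "theta E b = E b" for b
  proof -
    obtain mu r where b: "b = (mu, r)" by (cases b)
    show ?thesis unfolding b
      by (cases "mu = {#}") (auto simp: theta_def E_def vadd_def bv_def)
  qed
  have Ein: "E \<in> VLplus"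
  proof -
    have "theta E = E" by (rule ext, rule thE)
    then show ?thesis by (simp add: VLplus_def VL_def suppE)
  qed
  have thv: "theta vac b = vac b" for b
  proof -
    obtain mu r where b: "b = (mu, r)" by (cases b)
    show ?thesis unfolding b
      by (cases "mu = {#}") (auto simp: theta_def vac_def bv_def)
  qed
  have vin: "vac \<in> VLplus"
  proof -
    have "theta vac = vac" by (rule ext, rule thv)
    then show ?thesis by (simp add: VLplus_def VL_def vac_def supp_bv)
  qed
  have x: "vmode k E (-2) vac \<in> {vmode k v (-2) u | u v. u \<in> VLplus \<and> v \<in> VLplus}"
    using Ein vin by blast
  have ev: "emode k s (-2) vac = vsmult (of_int s) (bv ({#1#}, s))" for s
    unfolding vac_def by (rule emode_vac)
  have E1: "E ({#}, m) = 1" and E2: "E ({#}, -m) = 1"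
    using ne by (simp_all add: E_def vadd_def bv_def)
  have F1: "F m ({#}, m) = 1" and F2: "F m ({#}, -m) = -1"
    using ne by (simp_all add: F_def vadd_def vsmult_def bv_def)
  have hbv: "hb k (-1) (mu, r) = bv (mu + {#1#}, r)" for mu r by simp
  have eq: "hmode k (-1) (F m) = vadd (vsmult (1 / of_int m) (vmode k E (-2) vac)) vzero"
  proof (rule ext)
    fix c
    have "vmode k E (-2) vac c = E ({#}, m) * emode k m (-2) vac c + E ({#}, -m) * emode k (-m) (-2) vac c"
      using ne unfolding vmode_def suppE by simp
    also have "\<dots> = of_int m * bv ({#1#}, m) c - of_int m * bv ({#1#}, -m) c"
      unfolding E1 E2 ev by (simp add: vsmult_def)
    finally have 1: "vmode k E (-2) vac c = of_int m * (bv ({#1#}, m) c - bv ({#1#}, -m) c)"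
      by (simp add: algebra_simps)
    have 2: "hmode k (-1) (F m) c = bv ({#1#}, m) c - bv ({#1#}, -m) c"
      unfolding hmode_def lin_two[OF suppF ne] F1 F2 hbv by simp
    have m0: "(of_int m :: complex) \<noteq> 0" using assms by simp
    show "hmode k (-1) (F m) c = vadd (vsmult (1 / of_int m) (vmode k E (-2) vac)) vzero c"
      unfolding vadd_def vsmult_def vzero_def 1 2 using m0 by simp
  qed
  show ?thesis unfolding C2_def eq
    by (rule cspan.add[OF x cspan.zero])
qed

end
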